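(* Let $A\in\mathbb{R}^{m\times n}$ be semi-monotone (i.e. $A^{\dagger}\geq 0$), and let $A=M-N=U-V$ be two proper weak regular splittings of $A$. Then $\rho(H)=\rho(U^{\dagger}VM^{\dagger}N)<1$.
   Context: All matrices are real. $X^{\dagger}$ denotes the Moore–Penrose inverse of $X$, and $\rho(\cdot)$ the spectral radius. For a matrix $X$, $X\geq 0$ means that all entries of $X$ are nonnegative and at least one entry is positive; $X\geq Y$ means $X-Y\geq 0$. $R(X)$ and $N(X)$ denote range and null space. A splitting $A=U-V$ is proper if $R(U)=R(A)$ and $N(U)=N(A)$; it is a proper weak regular splitting if it is proper, $U^{\dagger}\geq 0$ and $U^{\dagger}V\geq 0$. $H=U^{\dagger}VM^{\dagger}N$ is the iteration matrix of the alternating scheme $x^{i+1}=U^{\dagger}VM^{\dagger}Nx^{i}+U^{\dagger}(VM^{\dagger}+I)b$. *)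

theory Defs
  imports "HOL-Analysis.Analysis"
begin

text \<open>Moore--Penrose inverse, defined by the four Penrose equations (the solution is unique).\<close>
definition mp_inverse :: "real^'n^'m \<Rightarrow> real^'m^'n" where
  "mp_inverse A = (THE X. A ** X ** A = A \<and> X ** A ** X = X \<and>
      transpose (A ** X) = A ** X \<and> transpose (X ** A) = X ** A)"

text \<open>Paper's convention: X \<ge> 0 means all entries nonnegative and at least one positive.\<close>
definition mat_nonneg :: "real^'n^'m \<Rightarrow> bool" where
  "mat_nonneg X \<longleftrightarrow> (\<forall>i j. X $ i $ j \<ge> 0) \<and> (\<exists>i j. X $ i $ j > 0)"

definition mat_range :: "real^'n^'m \<Rightarrow> (real^'m) set" where
  "mat_range A = range (\<lambda>x. A *v x)"

definition mat_null :: "real^'n^'m \<Rightarrow> (real^'n) set" where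
  "mat_null A = {x. A *v x = 0}"

definition proper_splitting :: "real^'n^'m \<Rightarrow> real^'n^'m \<Rightarrow> real^'n^'m \<Rightarrow> bool" where
  "proper_splitting A U V \<longleftrightarrow> A = U - V \<and> mat_range U = mat_range A \<and> mat_null U = mat_null A"

definition proper_weak_regular_splitting :: "real^'n^'m \<Rightarrow> real^'n^'m \<Rightarrow> real^'n^'m \<Rightarrow> bool" where
  "proper_weak_regular_splitting A U V \<longleftrightarrow> proper_splitting A U V \<and>
      mat_nonneg (mp_inverse U) \<and> mat_nonneg (mp_inverse U ** V)"

definition semi_monotone :: "real^'n^'m \<Rightarrow> bool" where
  "semi_monotone A \<longleftrightarrow> mat_nonneg (mp_inverse A)"

definition complexify :: "real^'n^'m \<Rightarrow> complex^'n^'m" where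
  "complexify B = (\<chi> i j. complex_of_real (B $ i $ j))"

definition spectral_radius :: "real^'n^'n \<Rightarrow> real" where
  "spectral_radius B = Max {cmod l | l. \<exists>v. v \<noteq> 0 \<and> complexify B *v v = l *s v}"

end

theory Submission
  imports Defs "Jordan_Normal_Form.Char_Poly"
begin

no_notation Matrix.vec_index (infixl "$" 100)
no_notation Matrix.scalar_prod (infix "\<bullet>" 70)

lemma proj_unique:
  fixes S :: "(real^'k) set"
  assumes S: "real_vector.subspace S"
    and y: "y \<in> S" "\<forall>w\<in>S. inner (x - y) w = 0"
    and y': "y' \<in> S" "\<forall>w\<in>S. inner (x - y') w = 0"
  shows "y = y'"
proof -
  have d: "y - y' \<in> S" using S y y' by (simp add: subspace_diff)
  have "inner (y - y') (y - y') = inner (x - y') (y - y') - inner (x - y) (y - y')"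
    by (simp add: inner_diff_left)
  also have "\<dots> = 0" using d y y' by simp
  finally show ?thesis by simp
qed

lemma proj_ex1:
  fixes S :: "(real^'k) set"
  assumes S: "real_vector.subspace S"
  shows "\<exists>y. y \<in> S \<and> (\<forall>w\<in>S. inner (x - y) w = 0)"
proof -
  obtain y z where "y \<in> span S" "\<And>w. w \<in> span S \<Longrightarrow> real_inner_class.orthogonal z w" "x = y + z"
    by (rule orthogonal_subspace_decomp_exists[of S x]) auto
  moreover have "span S = S" using S by (simp add: span_eq_iff)
  ultimately show ?thesis by (auto simp: real_inner_class.orthogonal_def)
qed

definition proj :: "(real^'k) set \<Rightarrow> real^'k \<Rightarrow> real^'k" where
  "proj S x = (SOME y. y \<in> S \<and> (\<forall>w\<in>S. inner (x - y) w = 0))"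

lemma proj_props:
  assumes S: "real_vector.subspace S"
  shows "proj S x \<in> S" "\<forall>w\<in>S. inner (x - proj S x) w = 0"
  using someI_ex[OF proj_ex1[OF S, of x]] unfolding proj_def by auto

lemma proj_eqI:
  assumes S: "real_vector.subspace S" and "y \<in> S" "\<forall>w\<in>S. inner (x - y) w = 0"
  shows "proj S x = y"
  using proj_unique[OF S proj_props[OF S] assms(2,3)] .

lemma proj_linear:
  assumes S: "real_vector.subspace S"
  shows "linear (proj S)"
proof (rule linearI)
  fix x y
  show "proj S (x + y) = proj S x + proj S y"
    apply (rule proj_eqI[OF S])
    using proj_props[OF S, of x] proj_props[OF S, of y] S
    by (auto simp: subspace_add algebra_simps inner_diff_left inner_add_left)
next
  fix c x
  show "proj S (c *\<^sub>R x) = c *\<^sub>R proj S x"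
    apply (rule proj_eqI[OF S])
    using proj_props[OF S, of x] S
    by (auto simp: subspace_scale inner_diff_left simp flip: scaleR_diff_right)
qed

lemma proj_id: "real_vector.subspace S \<Longrightarrow> s \<in> S \<Longrightarrow> proj S s = s"
  by (rule proj_eqI) auto

lemma proj_idem: "real_vector.subspace S \<Longrightarrow> proj S (proj S x) = proj S x"
  by (simp add: proj_id proj_props)

lemma proj_orth0: "real_vector.subspace S \<Longrightarrow> \<forall>w\<in>S. inner z w = 0 \<Longrightarrow> proj S z = 0"
  by (rule proj_eqI) (auto simp: subspace_0)

lemma proj_sym:
  assumes S: "real_vector.subspace S"
  shows "inner (proj S x) y = inner x (proj S y)"
proof -
  have "inner (proj S x) y = inner (proj S x) (proj S y)"
    using proj_props[OF S, of y] proj_props[OF S, of x]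
    by (metis inner_commute inner_diff_right right_minus_eq)
  also have "\<dots> = inner x (proj S y)"
    using proj_props[OF S, of y] proj_props[OF S, of x]
    by (metis inner_diff_left right_minus_eq)
  finally show ?thesis .
qed



lemma inner_mat_transpose:
  fixes A :: "real^'n^'m"
  shows "inner (A *v z) y = inner z (transpose A *v y)"
  unfolding inner_vec_def matrix_vector_mult_def transpose_def
  by (simp add: sum_distrib_left sum_distrib_right mult.assoc mult.left_commute sum.swap[of _ "UNIV::'m set"])

lemma subspace_range_mat:
  fixes A :: "real^'n^'m"
  shows "real_vector.subspace (range (\<lambda>x. A *v x))"
  unfolding real_vector.subspace_def
proof (intro conjI ballI allI)
  show "0 \<in> range (\<lambda>x. A *v x)" by (metis matrix_vector_mult_0_right rangeI)
next
  fix x y assume "x \<in> range (\<lambda>x. A *v x)" "y \<in> range (\<lambda>x. A *v x)"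
  then obtain a b where "x = A *v a" "y = A *v b" by auto
  thus "x + y \<in> range (\<lambda>x. A *v x)" by (metis matrix_vector_right_distrib rangeI)
next
  fix c x assume "x \<in> range (\<lambda>x. A *v x)"
  then obtain a where "x = A *v a" by auto
  thus "c *\<^sub>R x \<in> range (\<lambda>x. A *v x)" by (metis matrix_vector_mult_scaleR rangeI)
qed

lemma null_iff_orth:
  fixes A :: "real^'n^'m"
  shows "A *v z = 0 \<longleftrightarrow> (\<forall>w\<in>range (\<lambda>y. transpose A *v y). inner z w = 0)"
proof
  assume "A *v z = 0" thus "\<forall>w\<in>range (\<lambda>y. transpose A *v y). inner z w = 0"
    by (metis (no_types) inner_mat_transpose inner_zero_left rangeE)
next
  assume "\<forall>w\<in>range (\<lambda>y. transpose A *v y). inner z w = 0"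
  hence "inner z (transpose A *v (A *v z)) = 0" by auto
  hence "inner (A *v z) (A *v z) = 0" by (simp add: inner_mat_transpose)
  thus "A *v z = 0" by simp
qed

lemma sym_mat:
  fixes M :: "real^'n^'n"
  assumes "\<And>x y. inner (M *v x) y = inner x (M *v y)"
  shows "transpose M = M"
proof -
  have "transpose M *v y = M *v y" for y
  proof -
    have "inner x (transpose M *v y - M *v y) = 0" for x
      using assms[of x y] by (simp add: inner_diff_right inner_mat_transpose)
    from this[of "transpose M *v y - M *v y"] show ?thesis by simp
  qed
  thus ?thesis by (simp add: matrix_eq)
qed

definition penrose :: "real^'n^'m \<Rightarrow> real^'m^'n \<Rightarrow> bool" where
  "penrose A X \<longleftrightarrow> A ** X ** A = A \<and> X ** A ** X = X \<and>
      transpose (A ** X) = A ** X \<and> transpose (X ** A) = X ** A"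

lemma penrose_exists:
  fixes A :: "real^'n^'m"
  shows "\<exists>X. penrose A X"
proof -
  define R where "R = range (\<lambda>x. A *v x)"
  define K where "K = range (\<lambda>y. transpose A *v y)"
  have sR: "real_vector.subspace R" unfolding R_def by (rule subspace_range_mat)
  have sK: "real_vector.subspace K" unfolding K_def by (rule subspace_range_mat)
  define P where "P = proj R"
  define Q where "Q = proj K"
  have AQ: "A *v (Q u) = A *v u" for u
  proof -
    have "A *v (u - Q u) = 0"
      unfolding null_iff_orth K_def[symmetric] Q_def using proj_props(2)[OF sK] by auto
    thus ?thesis by (simp add: matrix_vector_mult_diff_distrib)
  qed
  have QA: "Q u = Q u'" if "A *v u = A *v u'" for u u'
  proof -
    have "A *v (u - u') = 0" using that by (simp add: matrix_vector_mult_diff_distrib)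
    hence "Q (u - u') = 0" unfolding null_iff_orth K_def[symmetric] Q_def
      by (rule proj_orth0[OF sK])
    thus ?thesis using linear_diff[OF proj_linear[OF sK]] unfolding Q_def by simp
  qed
  define f where "f y = Q (SOME u. A *v u = P y)" for y
  have fex: "\<exists>u. A *v u = P y" for y
    using proj_props(1)[OF sR, of y] unfolding P_def R_def by auto
  have fchar: "f y = Q u" if "A *v u = P y" for y u
    unfolding f_def by (rule QA) (metis (mono_tags) someI_ex[OF fex[of y]] that)
  have fA: "f (A *v w) = Q w" for w
    by (rule fchar) (unfold P_def, rule proj_id[OF sR, symmetric], simp add: R_def)
  have Af: "A *v f y = P y" for y
    using AQ fex[of y] fchar by metis
  have linP: "linear P" unfolding P_def by (rule proj_linear[OF sR])
  have linQ: "linear Q" unfolding Q_def by (rule proj_linear[OF sK])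
  have lf: "linear f"
  proof (rule linearI)
    fix y y'
    obtain u where u: "A *v u = P y" using fex by blast
    obtain u' where u': "A *v u' = P y'" using fex by blast
    have "f (y + y') = Q (u + u')"
      by (rule fchar) (simp add: u u' linear_add[OF linP] matrix_vector_right_distrib)
    thus "f (y + y') = f y + f y'" using fchar[OF u] fchar[OF u'] linear_add[OF linQ] by simp
  next
    fix c y
    obtain u where u: "A *v u = P y" using fex by blast
    have "f (c *\<^sub>R y) = Q (c *\<^sub>R u)"
      by (rule fchar) (simp add: u linear_scale[OF linP] matrix_vector_mult_scaleR)
    thus "f (c *\<^sub>R y) = c *\<^sub>R f y" using fchar[OF u] linear_scale[OF linQ] by simp
  qed
  define X where "X = matrix f"
  have X: "X *v y = f y" for y
    unfolding X_def using matrix_works[of f] lf linear_matrix_vector_mul_eq by blast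
  have "penrose A X"
    unfolding penrose_def
  proof (intro conjI)
    show "A ** X ** A = A"
      by (simp add: matrix_eq X fA AQ flip: matrix_vector_mul_assoc)
    show "X ** A ** X = X"
    proof -
      have "f y = Q (f y)" for y
        using fchar[OF Af[of y], symmetric] unfolding Q_def by (simp add: proj_idem[OF sK])
      thus ?thesis by (simp add: matrix_eq X fA flip: matrix_vector_mul_assoc)
    qed
    show "transpose (A ** X) = A ** X"
      by (rule sym_mat) (simp add: X Af P_def proj_sym[OF sR] flip: matrix_vector_mul_assoc)
    show "transpose (X ** A) = X ** A"
      by (rule sym_mat) (simp add: X fA Q_def proj_sym[OF sK] flip: matrix_vector_mul_assoc)
  qed
  thus ?thesis by blast
qed

lemma penrose_unique:
  fixes A :: "real^'n^'m"
  assumes X: "penrose A X" and Y: "penrose A Y"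
  shows "X = Y"
proof -
  have X1: "A ** X ** A = A" and X2: "X ** A ** X = X" and X3: "transpose (A ** X) = A ** X"
    and X4: "transpose (X ** A) = X ** A" using X unfolding penrose_def by auto
  have Y1: "A ** Y ** A = A" and Y2: "Y ** A ** Y = Y" and Y3: "transpose (A ** Y) = A ** Y"
    and Y4: "transpose (Y ** A) = Y ** A" using Y unfolding penrose_def by auto
  have "X = X ** (A ** X)" using X2 by (simp add: matrix_mul_assoc)
  also have "\<dots> = X ** transpose (A ** X)" using X3 by simp
  also have "\<dots> = X ** transpose (A ** Y ** A ** X)" using Y1 by simp
  also have "\<dots> = X ** (transpose (A ** X) ** transpose (A ** Y))"
    by (simp add: matrix_transpose_mul matrix_mul_assoc)
  also have "\<dots> = X ** A ** X ** A ** Y" using X3 Y3 by (simp add: matrix_mul_assoc)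
  also have "\<dots> = X ** A ** Y" using X2 by simp
  finally have eX: "X = X ** A ** Y" .
  have "Y = (Y ** A) ** Y" using Y2 by simp
  also have "\<dots> = transpose (Y ** A) ** Y" using Y4 by simp
  also have "\<dots> = transpose (Y ** A ** X ** A) ** Y" using X1 by (metis matrix_mul_assoc)
  also have "\<dots> = (transpose (X ** A) ** transpose (Y ** A)) ** Y"
    by (simp add: matrix_transpose_mul matrix_mul_assoc)
  also have "\<dots> = X ** A ** Y ** A ** Y" using X4 Y4 by (simp add: matrix_mul_assoc)
  also have "\<dots> = X ** A ** Y" using Y2 by (metis matrix_mul_assoc)
  finally show ?thesis using eX by simp
qed

lemma penrose_mp: "penrose A (mp_inverse A)"
proof -
  obtain X where X: "penrose A X" using penrose_exists by blast
  have "mp_inverse A = X" unfolding mp_inverse_def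
    by (rule the_equality) (use X penrose_unique in \<open>auto simp: penrose_def\<close>)
  thus ?thesis using X by simp
qed



lemma mm_diff_left: "(A::real^'n^'m) ** (B - C) = A ** B - A ** C"
  by (simp add: matrix_eq matrix_vector_mult_diff_rdistrib matrix_vector_mult_diff_distrib flip: matrix_vector_mul_assoc)
lemma mm_diff_right: "((A::real^'n^'m) - B) ** C = A ** C - B ** C"
  by (simp add: matrix_eq matrix_vector_mult_diff_rdistrib flip: matrix_vector_mul_assoc)
lemma mm_add_right: "((A::real^'n^'m) + B) ** C = A ** C + B ** C"
  by (simp add: matrix_eq matrix_vector_mult_add_rdistrib flip: matrix_vector_mul_assoc)

lemma null_proj:
  fixes A U :: "real^'n^'m"
  assumes "mat_null U = mat_null A" "penrose A Ai"
  shows "U ** (Ai ** A) = U"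
proof -
  have "U *v ((Ai ** A) *v x) = U *v x" for x
  proof -
    have "A *v (x - (Ai ** A) *v x) = 0"
      using assms(2) unfolding penrose_def
      by (simp add: matrix_vector_mult_diff_distrib matrix_vector_mul_assoc matrix_mul_assoc)
    hence "x - (Ai ** A) *v x \<in> mat_null U" using assms(1) by (simp add: mat_null_def)
    thus ?thesis by (simp add: mat_null_def matrix_vector_mult_diff_distrib)
  qed
  thus ?thesis by (simp add: matrix_eq flip: matrix_vector_mul_assoc)
qed

lemma range_proj:
  fixes A U :: "real^'n^'m"
  assumes "mat_range U = mat_range A" "penrose A Ai"
  shows "(A ** Ai) ** U = U"
proof -
  have "(A ** Ai) *v (U *v x) = U *v x" for x
  proof -
    have "U *v x \<in> mat_range A" using assms(1) by (auto simp: mat_range_def)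
    then obtain w where "U *v x = A *v w" by (auto simp: mat_range_def)
    thus ?thesis using assms(2) unfolding penrose_def by (simp add: matrix_vector_mul_assoc)
  qed
  thus ?thesis by (simp add: matrix_eq flip: matrix_vector_mul_assoc)
qed

lemma range_proj2:
  fixes A U :: "real^'n^'m"
  assumes "mat_range U = mat_range A" "penrose A Ai" "penrose U Ui"
  shows "Ui ** (A ** Ai) = Ui"
proof -
  have r: "(A ** Ai) ** U = U" by (rule range_proj[OF assms(1,2)])
  have s: "transpose (A ** Ai) = A ** Ai" using assms(2) unfolding penrose_def by simp
  have "transpose U ** (A ** Ai) = transpose U ** transpose (A ** Ai)" using s by simp
  also have "\<dots> = transpose ((A ** Ai) ** U)" by (simp only: matrix_transpose_mul)
  also have "\<dots> = transpose U" using r by simp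
  finally have t: "transpose U ** (A ** Ai) = transpose U" .
  have u1: "Ui ** U ** Ui = Ui" and u3: "transpose (U ** Ui) = U ** Ui"
    using assms(3) unfolding penrose_def by simp_all
  have "Ui = Ui ** (U ** Ui)" using u1 by (simp add: matrix_mul_assoc)
  also have "\<dots> = Ui ** transpose (U ** Ui)" using u3 by simp
  also have "\<dots> = Ui ** (transpose Ui ** transpose U)" by (simp only: matrix_transpose_mul)
  finally have e: "Ui = Ui ** (transpose Ui ** transpose U)" .
  have "Ui ** (A ** Ai) = Ui ** (transpose Ui ** (transpose U ** (A ** Ai)))"
    by (subst e) (simp only: matrix_mul_assoc)
  also have "\<dots> = Ui" using t e by simp
  finally show ?thesis .
qed

lemma proj_eq:
  fixes A U :: "real^'n^'m"
  assumes "mat_null U = mat_null A" "penrose A Ai" "penrose U Ui"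
  shows "Ui ** U = Ai ** A"
proof -
  have n1: "U ** (Ai ** A) = U" by (rule null_proj[OF assms(1,2)])
  have n2: "A ** (Ui ** U) = A" by (rule null_proj[OF assms(1)[symmetric] assms(3)])
  have a: "Ui ** U ** (Ai ** A) = Ui ** U"
    by (simp only: n1 matrix_mul_assoc[symmetric])
  have b: "Ai ** A ** (Ui ** U) = Ai ** A"
    by (simp only: n2 matrix_mul_assoc[symmetric])
  have t1: "transpose (Ai ** A) = Ai ** A" and t2: "transpose (Ui ** U) = Ui ** U"
    using assms(2,3) unfolding penrose_def by simp_all
  have "Ai ** A = transpose (Ai ** A ** (Ui ** U))" using b t1 by simp
  also have "\<dots> = transpose (Ui ** U) ** transpose (Ai ** A)" by (simp only: matrix_transpose_mul)
  also have "\<dots> = Ui ** U ** (Ai ** A)" using t1 t2 by simp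
  also have "\<dots> = Ui ** U" by (rule a)
  finally show ?thesis by simp
qed

primrec pw :: "real^'n^'n \<Rightarrow> nat \<Rightarrow> real^'n^'n" where
  "pw H 0 = Finite_Cartesian_Product.mat 1"
| "pw H (Suc k) = pw H k ** H"

definition nn :: "real^'n^'m \<Rightarrow> bool" where "nn X \<longleftrightarrow> (\<forall>i j. 0 \<le> X $ i $ j)"

lemma nn_mult: "nn X \<Longrightarrow> nn Y \<Longrightarrow> nn (X ** Y)"
  unfolding nn_def matrix_matrix_mult_def by (auto intro!: sum_nonneg)
lemma nn_one: "nn (Finite_Cartesian_Product.mat 1 :: real^'n^'n)"
  unfolding nn_def Finite_Cartesian_Product.mat_def by auto
lemma nn_pw: "nn H \<Longrightarrow> nn (pw H k)"
  by (induction k) (auto intro: nn_mult nn_one)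
lemma nn_of: "mat_nonneg X \<Longrightarrow> nn X"
  unfolding nn_def mat_nonneg_def by auto

lemma powers_to_zero:
  fixes A M N U V :: "real^'n^'m"
  assumes A: "semi_monotone A"
    and MN: "proper_weak_regular_splitting A M N"
    and UV: "proper_weak_regular_splitting A U V"
  shows "(\<lambda>k. pw (mp_inverse U ** V ** mp_inverse M ** N) (Suc k) $ a $ b) \<longlonglongrightarrow> 0"
proof -
  define Ai where "Ai = mp_inverse A"
  define Mi where "Mi = mp_inverse M"
  define Ui where "Ui = mp_inverse U"
  define H where "H = Ui ** V ** Mi ** N"
  define P where "P = Ai ** A"
  have pA: "penrose A Ai" "penrose M Mi" "penrose U Ui" unfolding Ai_def Mi_def Ui_def
    by (rule penrose_mp)+
  have AMN: "A = M - N" and rM: "mat_range M = mat_range A" and nM: "mat_null M = mat_null A"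
    and Mi0: "nn Mi" and MiN0: "nn (Mi ** N)"
    using MN unfolding proper_weak_regular_splitting_def proper_splitting_def Mi_def
    by (auto intro: nn_of)
  have AUV: "A = U - V" and rU: "mat_range U = mat_range A" and nU: "mat_null U = mat_null A"
    and Ui0: "nn Ui" and UiV0: "nn (Ui ** V)"
    using UV unfolding proper_weak_regular_splitting_def proper_splitting_def Ui_def
    by (auto intro: nn_of)
  have Ai0: "nn Ai" using A unfolding semi_monotone_def Ai_def by (rule nn_of)
  have H0: "nn H" unfolding H_def using nn_mult[OF UiV0 MiN0] by (simp add: matrix_mul_assoc)
  have MiM: "Mi ** M = P" unfolding P_def by (rule proj_eq[OF nM pA(1,2)])
  have UiU: "Ui ** U = P" unfolding P_def by (rule proj_eq[OF nU pA(1,3)])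
  have MP: "M ** P = M" unfolding P_def by (rule null_proj[OF nM pA(1)])
  have UP: "U ** P = U" unfolding P_def by (rule null_proj[OF nU pA(1)])
  have AP: "A ** P = A" using pA(1) unfolding P_def penrose_def by (simp add: matrix_mul_assoc)
  have "N = M - A" using AMN by simp
  hence NP: "N ** P = N" using MP AP by (simp add: mm_diff_right)
  have "V = U - A" using AUV by simp
  hence VP: "V ** P = V" using UP AP by (simp add: mm_diff_right)
  have HP: "H ** P = H" unfolding H_def by (simp add: matrix_mul_assoc[symmetric] NP)
  have MiAA: "Mi ** (A ** Ai) = Mi" by (rule range_proj2[OF rM pA(1,2)])
  have UiAA: "Ui ** (A ** Ai) = Ui" by (rule range_proj2[OF rU pA(1,3)])
  have PAi: "P ** Ai = Ai" using pA(1) unfolding P_def penrose_def by simp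
  define B where "B = Ui ** V ** Mi + Ui"
  have BA: "B ** A = P - H"
  proof -
    have "Mi ** A = P - Mi ** N" using MiM AMN by (simp add: mm_diff_left)
    hence 1: "Ui ** V ** Mi ** A = Ui ** V - H"
      using VP by (simp add: H_def mm_diff_left flip: matrix_mul_assoc)
    have 2: "Ui ** A = P - Ui ** V" using UiU AUV by (simp add: mm_diff_left)
    show ?thesis unfolding B_def mm_add_right 1 2 by simp
  qed
  have BAA: "B ** A ** Ai = B"
    unfolding B_def mm_add_right using MiAA UiAA by (simp flip: matrix_mul_assoc)
  have Beq: "B = (P - H) ** Ai" using BAA BA by simp
  have pwSP: "pw H (Suc k) ** P = pw H (Suc k)" for k
    using HP by (simp flip: matrix_mul_assoc)
  define T where "T j = (\<Sum>k<j. pw H k ** B)" for j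
  have Teq: "T (Suc j) = Ai - pw H (Suc j) ** Ai" for j
  proof (induction j)
    case 0
    show ?case by (simp add: T_def Beq mm_diff_right PAi)
  next
    case (Suc j)
    have "T (Suc (Suc j)) = T (Suc j) + pw H (Suc j) ** B" by (simp add: T_def)
    also have "\<dots> = Ai - pw H (Suc j) ** Ai + (pw H (Suc j) ** P ** Ai - pw H (Suc j) ** H ** Ai)"
      by (simp add: Suc Beq mm_diff_left mm_diff_right matrix_mul_assoc)
    also have "\<dots> = Ai - pw H (Suc (Suc j)) ** Ai" using pwSP[of j] by (simp add: algebra_simps)
    finally show ?case .
  qed
  have flim: "(\<lambda>k. (pw H k ** Ui) $ i $ j) \<longlonglongrightarrow> 0" for i j
  proof -
    define f where "f k = (pw H k ** Ui) $ i $ j" for k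
    have f0: "0 \<le> f k" for k unfolding f_def using nn_mult[OF nn_pw[OF H0] Ui0] nn_def by blast
    have fB: "f k \<le> (pw H k ** B) $ i $ j" for k
    proof -
      have "pw H k ** B = pw H k ** (Ui ** V ** Mi) + pw H k ** Ui"
        unfolding B_def by (rule matrix_add_ldistrib)
      moreover have "nn (pw H k ** (Ui ** V ** Mi))"
        by (intro nn_mult nn_pw H0 UiV0 Mi0)
      ultimately show ?thesis unfolding f_def nn_def by simp
    qed
    have fsum: "(\<Sum>k<n. f k) \<le> Ai $ i $ j" for n
    proof (cases n)
      case 0 thus ?thesis using Ai0 by (simp add: nn_def)
    next
      case (Suc j')
      have "(\<Sum>k<n. f k) \<le> (\<Sum>k<n. (pw H k ** B) $ i $ j)" by (rule sum_mono) (rule fB)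
      also have "\<dots> = T n $ i $ j" by (simp add: T_def)
      also have "\<dots> = Ai $ i $ j - (pw H (Suc j') ** Ai) $ i $ j" using Teq Suc by simp
      also have "\<dots> \<le> Ai $ i $ j"
      proof -
        have "0 \<le> (pw H (Suc j') ** Ai) $ i $ j" using nn_mult[OF nn_pw[OF H0] Ai0] unfolding nn_def by blast
        thus ?thesis by linarith
      qed
      finally show ?thesis .
    qed
    have "summable f" by (rule summableI_nonneg_bounded[OF f0 fsum])
    hence "f \<longlonglongrightarrow> 0" by (rule summable_LIMSEQ_zero)
    thus ?thesis unfolding f_def .
  qed
  define W where "W = V ** Mi ** N"
  have eq: "pw H (Suc k) = pw H k ** Ui ** W" for k
    by (simp add: H_def W_def matrix_mul_assoc)
  have ent: "pw H (Suc k) $ a $ b = (\<Sum>c\<in>UNIV. (pw H k ** Ui) $ a $ c * W $ c $ b)" for k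
    unfolding eq by (simp add: matrix_matrix_mult_def)
  have "(\<lambda>k. \<Sum>c\<in>UNIV. (pw H k ** Ui) $ a $ c * W $ c $ b) \<longlonglongrightarrow> 0"
    by (intro tendsto_null_sum tendsto_mult_left_zero flim)
  hence "(\<lambda>k. pw H (Suc k) $ a $ b) \<longlonglongrightarrow> 0" unfolding ent .
  thus ?thesis unfolding H_def Ui_def Mi_def .
qed



lemma nz_comp: "(v::'a::zero^'n) \<noteq> 0 \<Longrightarrow> \<exists>i. v $ i \<noteq> 0"
proof (rule ccontr)
  assume "v \<noteq> 0" "\<not> (\<exists>i. v $ i \<noteq> 0)"
  from this(2) have "v = 0" by (simp add: Finite_Cartesian_Product.vec_eq_iff)
  thus False using \<open>v \<noteq> 0\<close> by simp
qed

lemma complexify_mult: "complexify ((X::real^'n^'m) ** Y) = complexify X ** complexify Y"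
  by (simp add: complexify_def matrix_matrix_mult_def Finite_Cartesian_Product.vec_eq_iff)

lemma complexify_one: "complexify (Finite_Cartesian_Product.mat 1 :: real^'n^'n) = Finite_Cartesian_Product.mat 1"
  by (simp add: complexify_def Finite_Cartesian_Product.mat_def Finite_Cartesian_Product.vec_eq_iff fun_eq_iff)

lemma cmv_scale: "(A :: complex^'n^'m) *v (c *s x) = c *s (A *v x)"
  by (simp add: matrix_vector_mult_def vector_scalar_mult_def Finite_Cartesian_Product.vec_eq_iff sum_distrib_left mult.left_commute)

lemma eig_pow:
  assumes "complexify H *v v = l *s v"
  shows "complexify (pw H k) *v v = l ^ k *s v"
proof (induction k)
  case 0 thus ?case by (simp add: complexify_one)
next
  case (Suc k)
  have "complexify (pw H (Suc k)) *v v = complexify (pw H k) *v (complexify H *v v)"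
    by (simp add: complexify_mult matrix_vector_mul_assoc)
  also have "\<dots> = l ^ Suc k *s v" using assms Suc by (simp add: cmv_scale mult.commute)
  finally show ?case .
qed

lemma eig_lt1:
  assumes lim: "\<And>a b. (\<lambda>k. pw H (Suc k) $ a $ b) \<longlonglongrightarrow> 0"
    and v: "v \<noteq> 0" and ev: "complexify H *v v = l *s v"
  shows "cmod l < 1"
proof (rule ccontr)
  assume "\<not> cmod l < 1"
  hence l1: "1 \<le> cmod l" by simp
  obtain i where vi: "v $ i \<noteq> 0" using nz_comp[OF v] by blast
  have e: "(complexify (pw H (Suc k)) *v v) $ i = (\<Sum>c\<in>UNIV. of_real (pw H (Suc k) $ i $ c) * v $ c)" for k
    by (simp add: matrix_vector_mult_def complexify_def)
  have e2: "(\<Sum>c\<in>UNIV. of_real (pw H (Suc k) $ i $ c) * v $ c) = l ^ Suc k * v $ i" for k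
  proof -
    have "(complexify (pw H (Suc k)) *v v) $ i = l ^ Suc k * v $ i"
      by (simp only: eig_pow[OF ev]) simp
    thus ?thesis using e[of k] by simp
  qed
  have "(\<lambda>k. \<Sum>c\<in>UNIV. of_real (pw H (Suc k) $ i $ c) * v $ c) \<longlonglongrightarrow> 0"
    by (intro tendsto_null_sum tendsto_mult_left_zero) (use lim tendsto_of_real in fastforce)
  hence "(\<lambda>k. l ^ Suc k * v $ i) \<longlonglongrightarrow> 0"
    by (simp only: e2)
  hence "(\<lambda>k. l ^ Suc k * v $ i / v $ i) \<longlonglongrightarrow> 0 / v $ i" by (intro tendsto_intros) (use vi in auto)
  hence "(\<lambda>k. l ^ Suc k) \<longlonglongrightarrow> 0" using vi by simp
  then have "eventually (\<lambda>k. dist (l ^ Suc k) 0 < 1) sequentially" by (rule tendstoD) simp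
  then obtain k where "dist (l ^ Suc k) 0 < 1" by (meson eventually_sequentially order_refl)
  hence "cmod l ^ Suc k < 1" by (simp add: norm_power norm_mult)
  moreover have "1 \<le> cmod l ^ Suc k" using l1 by (rule one_le_power)
  ultimately show False by simp
qed

lemma eig_set:
  fixes C :: "complex^'n^'n"
  shows "finite {l. \<exists>v. v \<noteq> 0 \<and> C *v v = l *s v}" "{l. \<exists>v. v \<noteq> 0 \<and> C *v v = l *s v} \<noteq> {}"
proof -
  define n where "n = CARD('n)"
  obtain h where h: "bij_betw h {0..<n} (UNIV::'n set)"
    using ex_bij_betw_nat_finite[of "UNIV::'n set"] unfolding n_def by auto
  define g where "g = inv_into {0..<n} h"
  have hg: "h (g a) = a" for a using h unfolding g_def by (meson UNIV_I bij_betw_inv_into_right)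
  have gl: "g a < n" for a using h unfolding g_def
    by (metis UNIV_I atLeastLessThan_iff bij_betw_def inv_into_into)
  have gh: "i < n \<Longrightarrow> g (h i) = i" for i using h unfolding g_def
    by (simp add: bij_betw_inv_into_left)
  define JM where "JM = Matrix.mat n n (\<lambda>(i,j). C $ h i $ h j)"
  have JM: "JM \<in> carrier_mat n n" unfolding JM_def by simp
  have reidx: "(\<Sum>j\<in>{0..<n}. F (h j)) = (\<Sum>b\<in>UNIV. F b)" for F :: "'n \<Rightarrow> complex"
    by (rule sum.reindex_bij_betw[OF h])
  have "{l. \<exists>v. v \<noteq> 0 \<and> C *v v = l *s v} = {k. eigenvalue JM k}"
  proof (rule equalityI; rule subsetI)
    fix l assume "l \<in> {l. \<exists>v. v \<noteq> 0 \<and> C *v v = l *s v}"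
    then obtain v where v: "v \<noteq> 0" "C *v v = l *s v" by auto
    obtain a where va: "v $ a \<noteq> 0" using nz_comp[OF v(1)] by blast
    define w where "w = Matrix.vec n (\<lambda>i. v $ h i)"
    have wc: "w \<in> carrier_vec n" unfolding w_def by simp
    have w0: "w \<noteq> 0\<^sub>v n"
    proof
      assume "w = 0\<^sub>v n"
      hence "vec_index w (g a) = 0" using gl[of a] by simp
      thus False using va hg[of a] gl[of a] unfolding w_def by simp
    qed
    have "JM *\<^sub>v w = l \<cdot>\<^sub>v w"
    proof (rule eq_vecI)
      fix i assume "i < dim_vec (l \<cdot>\<^sub>v w)"
      hence i: "i < n" by (simp add: w_def)
      have "vec_index (JM *\<^sub>v w) i = (\<Sum>j\<in>{0..<n}. C $ h i $ h j * v $ h j)"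
        using i by (simp add: JM_def w_def scalar_prod_def)
      also have "\<dots> = (\<Sum>b\<in>UNIV. C $ h i $ b * v $ b)" by (rule reidx)
      also have "\<dots> = (C *v v) $ h i" by (simp add: matrix_vector_mult_def)
      also have "\<dots> = l * v $ h i" using v by simp
      finally show "vec_index (JM *\<^sub>v w) i = vec_index (l \<cdot>\<^sub>v w) i" using i by (simp add: w_def)
    qed (simp add: JM_def w_def)
    thus "l \<in> {k. eigenvalue JM k}" unfolding eigenvalue_def eigenvector_def
      using wc w0 JM by auto
  next
    fix l assume "l \<in> {k. eigenvalue JM k}"
    then obtain w where wc: "w \<in> carrier_vec n" and w0: "w \<noteq> 0\<^sub>v n" and ew: "JM *\<^sub>v w = l \<cdot>\<^sub>v w"
      unfolding eigenvalue_def eigenvector_def using JM by auto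
    define v where "v = (\<chi> a. vec_index w (g a))"
    have vh: "i < n \<Longrightarrow> v $ h i = vec_index w i" for i by (simp add: v_def gh)
    have "v \<noteq> 0"
    proof
      assume v0: "v = 0"
      have "w = 0\<^sub>v n"
      proof (rule eq_vecI)
        fix i assume "i < dim_vec (0\<^sub>v n)" hence i: "i < n" by simp
        show "vec_index w i = vec_index (0\<^sub>v n) i" using vh[OF i] v0 i by simp
      qed (use wc in simp)
      thus False using w0 by simp
    qed
    moreover have "C *v v = l *s v"
    proof (subst Finite_Cartesian_Product.vec_eq_iff, rule allI)
      fix a
      define i where "i = g a"
      have i: "i < n" and a: "a = h i" unfolding i_def by (simp_all add: gl hg)
      have "(C *v v) $ a = (\<Sum>b\<in>UNIV. C $ h i $ b * v $ b)" by (simp add: matrix_vector_mult_def a)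
      also have "\<dots> = (\<Sum>j\<in>{0..<n}. C $ h i $ h j * v $ h j)" by (rule reidx[symmetric])
      also have "\<dots> = (\<Sum>j\<in>{0..<n}. C $ h i $ h j * vec_index w j)" by (intro sum.cong) (simp_all add: vh)
      also have "\<dots> = vec_index (JM *\<^sub>v w) i" using i wc by (simp add: JM_def scalar_prod_def)
      also have "\<dots> = l * v $ a" using ew i wc by (simp add: a vh)
      finally show "(C *v v) $ a = (l *s v) $ a" by simp
    qed
    ultimately show "l \<in> {l. \<exists>v. v \<noteq> 0 \<and> C *v v = l *s v}" by auto
  qed
  moreover have "finite {k. eigenvalue JM k} \<and> {k. eigenvalue JM k} \<noteq> {}"
  proof -
    define CP where "CP = char_poly JM"
    have id: "{k. eigenvalue JM k} = {k. poly CP k = 0}"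
      unfolding CP_def using eigenvalue_root_char_poly[OF JM] by auto
    from degree_monic_char_poly[OF JM] have d: "degree CP = n" and c: "coeff CP n = 1"
      unfolding CP_def by auto
    from c have "CP \<noteq> 0" by auto
    hence f: "finite {k. poly CP k = 0}" by (rule poly_roots_finite)
    have "n > 0" by (simp add: n_def)
    hence "\<not> constant (poly CP)" using d by (simp add: constant_degree)
    from fundamental_theorem_of_algebra[OF this] f id show ?thesis by auto
  qed
  ultimately show "finite {l. \<exists>v. v \<noteq> 0 \<and> C *v v = l *s v}" "{l. \<exists>v. v \<noteq> 0 \<and> C *v v = l *s v} \<noteq> {}"
    by simp_all
qed

theorem theorem4p2:
  fixes A M N U V :: "real^'n^'m"
  assumes "semi_monotone A"
    and "proper_weak_regular_splitting A M N"
    and "proper_weak_regular_splitting A U V"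
  shows "spectral_radius (mp_inverse U ** V ** mp_inverse M ** N) < 1"
proof -
  define H where "H = mp_inverse U ** V ** mp_inverse M ** N"
  have lim: "\<And>a b. (\<lambda>k. pw H (Suc k) $ a $ b) \<longlonglongrightarrow> 0"
    unfolding H_def by (rule powers_to_zero[OF assms])
  define E where "E = {l. \<exists>v. v \<noteq> 0 \<and> complexify H *v v = l *s v}"
  have fin: "finite E" and ne: "E \<noteq> {}" unfolding E_def by (rule eig_set)+
  have S: "{cmod l | l. \<exists>v. v \<noteq> 0 \<and> complexify H *v v = l *s v} = cmod ` E"
    unfolding E_def by auto
  have "Max (cmod ` E) < 1"
    using fin ne eig_lt1[OF lim] by (auto simp: E_def)
  thus ?thesis unfolding spectral_radius_def S[folded H_def] H_def[symmetric] .
qed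

end
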